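(* Let $\beta>0$, $\bar\mu\in\mathbb{R}^{N\times p}$, $g\in C^3(\mathbb{R})$, and $m=g\circ G_\beta:\mathbb{R}^{N\times p}\to\mathbb{R}$. Then for every $X\in\mathbb{R}^{N\times p}$, $$\sum_{k\in[N],j\in[p]}\Big|\frac{\partial m(X)}{\partial X_{kj}}\Big|\le\|g'\|_\infty,$$ $$\sum_{k_1,k_2\in[N],\,j_1,j_2\in[p]}\Big|\frac{\partial^2m(X)}{\partial X_{k_1j_1}\partial X_{k_2j_2}}\Big|\le\|g''\|_\infty+4\beta\|g'\|_\infty,$$ $$\sum_{k_1,k_2,k_3\in[N],\,j_1,j_2,j_3\in[p]}\Big|\frac{\partial^3m(X)}{\partial X_{k_1j_1}\partial X_{k_2j_2}\partial X_{k_3j_3}}\Big|\le\|g'''\|_\infty+16\beta\|g''\|_\infty+24\beta^2\|g'\|_\infty.$$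
   Context: For $k\in[N]$ and $v\in\mathbb{R}^p$, $F_{\beta,\bar\mu_k}(v)=\beta^{-1}\log\big(\sum_{j=1}^p\exp(\beta\{v_j+\bar\mu_{kj}\})\big)$; for $X\in\mathbb{R}^{N\times p}$ with rows $X_{1\cdot},\dots,X_{N\cdot}$, $F_{\beta,\bar\mu}(X)=(F_{\beta,\bar\mu_1}(X_{1\cdot}),\dots,F_{\beta,\bar\mu_N}(X_{N\cdot}))'\in\mathbb{R}^N$; for $u\in\mathbb{R}^N$, $F_{\beta,0}(u)=\beta^{-1}\log\sum_{k=1}^N\exp(\beta u_k)$; and $G_\beta(X)=-F_{\beta,0}(-F_{\beta,\bar\mu}(X))$. $\|g^{(r)}\|_\infty=\sup_{t\in\mathbb{R}}|g^{(r)}(t)|$. *)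

theory Defs
  imports "HOL-Analysis.Analysis" "HOL-Library.Extended_Real"
begin

text \<open>Matrices in R^{N x p} are rendered as real^'p^'n, row k is X$k, entry X_{kj} is X$k$j.\<close>

definition Fk :: "real \<Rightarrow> real^'p \<Rightarrow> real^'p \<Rightarrow> real" where
  "Fk \<beta> muk v = ln (\<Sum>j\<in>UNIV. exp (\<beta> * (v$j + muk$j))) / \<beta>"

definition Fvec :: "real \<Rightarrow> real^'p^'n \<Rightarrow> real^'p^'n \<Rightarrow> real^'n" where
  "Fvec \<beta> mu X = (\<chi> k. Fk \<beta> (mu$k) (X$k))"

definition F0 :: "real \<Rightarrow> real^'n \<Rightarrow> real" where
  "F0 \<beta> u = ln (\<Sum>k\<in>UNIV. exp (\<beta> * u$k)) / \<beta>"

definition Gbeta :: "real \<Rightarrow> real^'p^'n \<Rightarrow> real^'p^'n \<Rightarrow> real" where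
  "Gbeta \<beta> mu X = - F0 \<beta> (- Fvec \<beta> mu X)"

definition Emat :: "'n \<Rightarrow> 'p \<Rightarrow> real^'p^'n" where
  "Emat k j = (\<chi> a b. if a = k \<and> b = j then 1 else 0)"

definition pd :: "(real^'p^'n \<Rightarrow> real) \<Rightarrow> 'n \<Rightarrow> 'p \<Rightarrow> real^'p^'n \<Rightarrow> real" where
  "pd f k j X = deriv (\<lambda>t. f (X + t *\<^sub>R Emat k j)) 0"

definition supnorm :: "(real \<Rightarrow> real) \<Rightarrow> ereal" where
  "supnorm h = (SUP t. ereal \<bar>h t\<bar>)"

end

theory Submission
  imports Defs
begin


definition dd :: "(real^'p::finite^'n::finite \<Rightarrow> real) \<Rightarrow> ('n \<times> 'p) \<Rightarrow> (real^'p^'n \<Rightarrow> real) \<Rightarrow> bool" where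
  "dd h i h' \<longleftrightarrow> (\<forall>Y. ((\<lambda>t. h (Y + t *\<^sub>R Emat (fst i) (snd i))) has_real_derivative h' Y) (at 0))"

lemma dd_pd: assumes "dd h (k,j) h'" shows "pd h k j = h'"
proof
  fix Y show "pd h k j Y = h' Y"
    using assms unfolding dd_def pd_def by (auto intro: DERIV_imp_deriv)
qed

lemma Emat_comp: "(Y + t *\<^sub>R Emat k j) $ a $ b = Y$a$b + t * (if a = k \<and> b = j then 1 else 0)"
  by (simp add: Emat_def)

lemma dd_entry: "dd (\<lambda>Y. Y$a$b) i (\<lambda>Y. if (a,b) = i then 1 else 0)"
  unfolding dd_def Emat_comp
  by (cases i) (auto intro!: derivative_eq_intros)

lemma dd_const: "dd (\<lambda>Y. c) i (\<lambda>Y. 0)"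
  unfolding dd_def by simp

lemma dd_add: "dd f i f' \<Longrightarrow> dd h i h' \<Longrightarrow> dd (\<lambda>Y. f Y + h Y) i (\<lambda>Y. f' Y + h' Y)"
  unfolding dd_def by (auto intro!: derivative_eq_intros)

lemma dd_mult: "dd f i f' \<Longrightarrow> dd h i h' \<Longrightarrow> dd (\<lambda>Y. f Y * h Y) i (\<lambda>Y. f' Y * h Y + f Y * h' Y)"
  unfolding dd_def by (auto intro!: derivative_eq_intros)

lemma dd_sum: "(\<And>x. x \<in> A \<Longrightarrow> dd (f x) i (f' x)) \<Longrightarrow> dd (\<lambda>Y. \<Sum>x\<in>A. f x Y) i (\<lambda>Y. \<Sum>x\<in>A. f' x Y)"
  unfolding dd_def by (auto intro!: derivative_eq_intros)

lemma dd_chain: assumes "\<And>x. (f has_real_derivative f' x) (at x)" "dd h i h'"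
  shows "dd (\<lambda>Y. f (h Y)) i (\<lambda>Y. f' (h Y) * h' Y)"
  using assms unfolding dd_def
  by (auto intro!: DERIV_chain2[where f=f and g="\<lambda>t. h (_ + t *\<^sub>R _)", simplified])

lemma dd_ln: assumes "\<And>Y. h Y > 0" "dd h i h'"
  shows "dd (\<lambda>Y. ln (h Y)) i (\<lambda>Y. h' Y / h Y)"
  using assms unfolding dd_def
  by (auto intro!: derivative_eq_intros)

lemma dd_inv: assumes "\<And>Y. h Y \<noteq> 0" "dd h i h'"
  shows "dd (\<lambda>Y. 1 / h Y) i (\<lambda>Y. - h' Y / (h Y)^2)"
  using assms unfolding dd_def
  by (auto intro!: derivative_eq_intros simp: power2_eq_square)

lemma dd_cong: "dd h i h' \<Longrightarrow> (\<And>Y. h' Y = h'' Y) \<Longrightarrow> dd h i h''"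
  unfolding dd_def by simp



lemma sum_pair2: "(\<Sum>z\<in>(UNIV::('a \<times> 'b) set). g z) = (\<Sum>a\<in>UNIV. \<Sum>j\<in>UNIV. (g (a,j) :: real))"
  unfolding UNIV_Times_UNIV[symmetric] sum.cartesian_product by simp

lemma sum_row: fixes f :: "('a::finite \<times> 'b::finite) \<Rightarrow> real"
  shows "(\<Sum>i1\<in>UNIV. (if fst i1 = r then f i1 else 0)) = (\<Sum>j\<in>UNIV. f (r,j))"
proof -
  have "(\<Sum>i1\<in>UNIV. (if fst i1 = r then f i1 else 0)) = (\<Sum>a\<in>UNIV. \<Sum>j\<in>UNIV. (if a = r then f (a,j) else 0))"
    by (simp only: sum_pair2 fst_conv)
  also have "\<dots> = (\<Sum>a\<in>UNIV. (if a = r then (\<Sum>j\<in>UNIV. f (a,j)) else 0))"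
    by (rule sum.cong) auto
  also have "\<dots> = (\<Sum>j\<in>UNIV. f (r,j))"
    by (simp add: sum.delta sum.delta')
  finally show ?thesis .
qed

lemma alg_pp: fixes e s e' b :: real assumes "s > 0"
  shows "(if c1 then b * e else 0) * (1 / s) + e * (- (if c2 then b * e' else 0) / s^2)
       = b * (e / s) * ((if c1 then 1 else 0) - (if c2 then e' / s else 0))"
  using assms by (cases c1; cases c2) (simp_all add: field_simps power2_eq_square)
lemma alg_qq: fixes e' sr sa S b :: real assumes "sr > 0" "sa > 0" "S > 0" "c \<Longrightarrow> sa = sr"
  shows "(- (if c then b * e' else 0) / sr^2) * (1 / S) + (1 / sr) * (- (- b * e' / sa^2) / S^2)
      = b * ((1/sr)/S) * (e'/sa) * ((1/sa)/S - (if c then 1 else 0))"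
  using assms by (cases c) (simp_all add: field_simps power2_eq_square)

lemma alg_ww: fixes b q p p' qa d :: real
  shows "(b*q*p'*(qa - (if c then 1 else 0)))*p + q*(b*p*(d - (if c then p' else 0)))
     = b*(q*p)*(d - 2*(if c then p' else 0) + qa*p')"
  by (cases c) (simp_all add: algebra_simps)
lemma alg_cc: fixes b W a x w :: real shows "b * W * (a - 2 * x + w) = b * W * (a + (- 2) * x + w)"
  by simp
lemma alg_dw: fixes b W x u v z D y :: real
  shows "(0 * W + b * x) * (u + (- 2) * v + z) + b * W * ((0 + (0 * v + (- 2) * D)) + y) = b * (x * (u - 2 * v + z) + W * (- 2 * D + y))"
  by (simp add: algebra_simps)

context fixes b :: real and mu :: "real^'p::finite^'n::finite" assumes bpos: "b > 0" begin

definition ee :: "'n\<times>'p \<Rightarrow> real^'p^'n \<Rightarrow> real" where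
  "ee i Y = exp (b * (Y$fst i$snd i + mu$fst i$snd i))"
definition ss :: "'n \<Rightarrow> real^'p^'n \<Rightarrow> real" where "ss r Y = (\<Sum>j\<in>UNIV. ee (r,j) Y)"
definition SS :: "real^'p^'n \<Rightarrow> real" where "SS Y = (\<Sum>r\<in>UNIV. 1 / ss r Y)"
definition pp :: "'n\<times>'p \<Rightarrow> real^'p^'n \<Rightarrow> real" where "pp i Y = ee i Y / ss (fst i) Y"
definition qq :: "'n \<Rightarrow> real^'p^'n \<Rightarrow> real" where "qq r Y = (1 / ss r Y) / SS Y"
definition ww :: "'n\<times>'p \<Rightarrow> real^'p^'n \<Rightarrow> real" where "ww i Y = qq (fst i) Y * pp i Y"

lemma ee_pos: "ee i Y > 0" by (simp add: ee_def)
lemma ss_pos: "ss r Y > 0" unfolding ss_def by (intro sum_pos) (auto simp: ee_pos)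
lemma SS_pos: "SS Y > 0" unfolding SS_def by (intro sum_pos) (auto simp: ss_pos)
lemma pp_pos: "pp i Y > 0" unfolding pp_def by (simp add: ee_pos ss_pos)
lemma qq_pos: "qq r Y > 0" unfolding qq_def by (simp add: SS_pos ss_pos)
lemma ww_pos: "ww i Y > 0" unfolding ww_def by (simp add: pp_pos qq_pos)

lemma sum_pp: "(\<Sum>j\<in>UNIV. pp (r,j) Y) = 1"
  using ss_pos[of r Y] unfolding pp_def by (simp add: sum_divide_distrib[symmetric] ss_def)
lemma sum_qq: "(\<Sum>r\<in>UNIV. qq r Y) = 1"
  using SS_pos[of Y] unfolding qq_def sum_divide_distrib[symmetric] SS_def[symmetric] by simp
lemma sum_ww: "(\<Sum>i\<in>UNIV. ww i Y) = 1"
proof -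
  have "(\<Sum>i\<in>UNIV. ww i Y) = (\<Sum>r\<in>UNIV. \<Sum>j\<in>UNIV. qq r Y * pp (r,j) Y)"
    by (simp only: sum_pair2 ww_def fst_conv snd_conv)
  also have "\<dots> = 1" by (simp add: sum_distrib_left[symmetric] sum_pp sum_qq)
  finally show ?thesis .
qed
lemma sum_pp_row: "(\<Sum>i1\<in>UNIV. (if fst i = fst i1 then pp i1 Y else 0)) = 1"
proof -
  have "(\<Sum>i1\<in>UNIV. (if fst i = fst i1 then pp i1 Y else 0)) = (\<Sum>i1\<in>UNIV. (if fst i1 = fst i then pp i1 Y else 0))"
    by (rule sum.cong) auto
  also have "\<dots> = (\<Sum>j\<in>UNIV. pp (fst i, j) Y)" by (rule sum_row)
  also have "\<dots> = 1" by (rule sum_pp)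
  finally show ?thesis .
qed

lemma G_eq: "Gbeta b mu Y = - ln (SS Y) / b"
proof -
  have "exp (b * - (ln (ss r Y) / b)) = 1 / ss r Y" for r
    using bpos ss_pos[of r Y] by (simp add: exp_minus exp_ln inverse_eq_divide)
  moreover have "ss r Y = (\<Sum>j\<in>UNIV. exp (b * (Y$r$j + mu$r$j)))" for r
    by (simp add: ss_def ee_def)
  ultimately show ?thesis
    unfolding Gbeta_def F0_def Fvec_def Fk_def SS_def by simp
qed


lemma dd_ee: "dd (ee i) i' (\<lambda>Y. if i = i' then b * ee i Y else 0)"
  unfolding dd_def ee_def Emat_comp
  by (cases i; cases i') (auto intro!: derivative_eq_intros)


lemma dd_ss: "dd (ss r) i' (\<lambda>Y. if fst i' = r then b * ee i' Y else 0)"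
proof -
  have e: "ss r = (\<lambda>Y. \<Sum>j\<in>UNIV. ee (r,j) Y)" by (rule ext) (simp add: ss_def)
  have "dd (\<lambda>Y. \<Sum>j\<in>UNIV. ee (r,j) Y) i' (\<lambda>Y. \<Sum>j\<in>UNIV. if (r,j) = i' then b*ee (r,j) Y else 0)"
    by (rule dd_sum, rule dd_ee)
  then show ?thesis unfolding e
    by (rule dd_cong) (cases i', auto)
qed

lemma dd_SS: "dd SS i' (\<lambda>Y. - b * ee i' Y / (ss (fst i') Y)^2)"
proof -
  have e: "SS = (\<lambda>Y. \<Sum>r\<in>UNIV. 1 / ss r Y)" by (rule ext) (simp add: SS_def)
  have d: "dd (\<lambda>Y. \<Sum>r\<in>UNIV. 1 / ss r Y) i' (\<lambda>Y. \<Sum>r\<in>UNIV. - (if fst i' = r then b * ee i' Y else 0) / (ss r Y)^2)"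
    by (rule dd_sum, rule dd_inv, rule less_imp_neq[symmetric], rule ss_pos, rule dd_ss)
  moreover have s: "(\<Sum>r\<in>UNIV. - (if fst i' = r then b * ee i' Y else 0) / (ss r Y)^2)
     = (\<Sum>r\<in>UNIV. if fst i' = r then - b * ee i' Y / (ss r Y)^2 else 0)" for Y
    by (rule sum.cong) auto
  show ?thesis unfolding e
    by (rule dd_cong[OF d], subst s, simp)
qed

lemma dd_G: "dd (Gbeta b mu) i' (ww i')"
proof -
  have e: "Gbeta b mu = (\<lambda>Y. (-1/b) * ln (SS Y))" by (rule ext) (simp add: G_eq)
  have "dd (\<lambda>Y. (-1/b) * ln (SS Y)) i' (\<lambda>Y. 0 * ln (SS Y) + (-1/b) * ((- b * ee i' Y / (ss (fst i') Y)^2) / SS Y))"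
    by (intro dd_mult dd_const dd_ln SS_pos dd_SS)
  then show ?thesis unfolding e
    apply (rule dd_cong)
    using bpos SS_pos ss_pos by (simp add: ww_def qq_def pp_def field_simps power2_eq_square)
qed

lemma dd_pp: "dd (pp i) i' (\<lambda>Y. b * pp i Y * ((if i = i' then 1 else 0) - (if fst i = fst i' then pp i' Y else 0)))"
proof -
  have e: "pp i = (\<lambda>Y. ee i Y * (1 / ss (fst i) Y))" by (rule ext) (simp add: pp_def)
  have "dd (\<lambda>Y. ee i Y * (1 / ss (fst i) Y)) i' (\<lambda>Y. (if i = i' then b * ee i Y else 0) * (1 / ss (fst i) Y)
      + ee i Y * (- (if fst i' = fst i then b * ee i' Y else 0) / (ss (fst i) Y)^2))"
    by (intro dd_mult dd_ee dd_inv less_imp_neq[symmetric] ss_pos dd_ss)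
  moreover have "\<And>Y. (if i = i' then b * ee i Y else 0) * (1 / ss (fst i) Y) + ee i Y * (- (if fst i' = fst i then b * ee i' Y else 0) / (ss (fst i) Y)^2)
      = b * pp i Y * ((if i = i' then 1 else 0) - (if fst i = fst i' then pp i' Y else 0))"
  proof -
    fix Y
    have h: "(if fst i = fst i' then pp i' Y else 0) = (if fst i' = fst i then ee i' Y / ss (fst i) Y else 0)"
      by (auto simp: pp_def)
    show "(if i = i' then b * ee i Y else 0) * (1 / ss (fst i) Y) + ee i Y * (- (if fst i' = fst i then b * ee i' Y else 0) / (ss (fst i) Y)^2)
      = b * pp i Y * ((if i = i' then 1 else 0) - (if fst i = fst i' then pp i' Y else 0))"
      unfolding h pp_def[of i Y] by (rule alg_pp[OF ss_pos])
  qed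
  ultimately show ?thesis unfolding e by (rule dd_cong)
qed

lemma dd_qq: "dd (qq r) i' (\<lambda>Y. b * qq r Y * pp i' Y * (qq (fst i') Y - (if r = fst i' then 1 else 0)))"
proof -
  have e: "qq r = (\<lambda>Y. (1 / ss r Y) * (1 / SS Y))" by (rule ext) (simp add: qq_def)
  have "dd (\<lambda>Y. (1 / ss r Y) * (1 / SS Y)) i' (\<lambda>Y. (- (if fst i' = r then b * ee i' Y else 0) / (ss r Y)^2) * (1 / SS Y)
      + (1 / ss r Y) * (- (- b * ee i' Y / (ss (fst i') Y)^2) / (SS Y)^2))"
    by (intro dd_mult dd_inv less_imp_neq[symmetric] ss_pos SS_pos dd_ss dd_SS)
  moreover have "\<And>Y. (- (if fst i' = r then b * ee i' Y else 0) / (ss r Y)^2) * (1 / SS Y)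
      + (1 / ss r Y) * (- (- b * ee i' Y / (ss (fst i') Y)^2) / (SS Y)^2)
      = b * qq r Y * pp i' Y * (qq (fst i') Y - (if r = fst i' then 1 else 0))"
  proof -
    fix Y
    have h: "(r = fst i') = (fst i' = r)" by auto
    show "(- (if fst i' = r then b * ee i' Y else 0) / (ss r Y)^2) * (1 / SS Y)
      + (1 / ss r Y) * (- (- b * ee i' Y / (ss (fst i') Y)^2) / (SS Y)^2)
      = b * qq r Y * pp i' Y * (qq (fst i') Y - (if r = fst i' then 1 else 0))"
      unfolding h pp_def qq_def by (rule alg_qq[OF ss_pos ss_pos SS_pos]) auto
  qed
  ultimately show ?thesis unfolding e by (rule dd_cong)
qed

definition CC :: "'n\<times>'p \<Rightarrow> 'n\<times>'p \<Rightarrow> real^'p^'n \<Rightarrow> real" where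
  "CC i i1 Y = (if i = i1 then 1 else 0) - 2 * (if fst i = fst i1 then pp i1 Y else 0) + ww i1 Y"
definition dw :: "'n\<times>'p \<Rightarrow> 'n\<times>'p \<Rightarrow> real^'p^'n \<Rightarrow> real" where
  "dw i i1 Y = b * ww i Y * CC i i1 Y"
definition dp :: "'n\<times>'p \<Rightarrow> 'n\<times>'p \<Rightarrow> real^'p^'n \<Rightarrow> real" where
  "dp i i1 Y = b * pp i Y * ((if i = i1 then 1 else 0) - (if fst i = fst i1 then pp i1 Y else 0))"
definition d2w :: "'n\<times>'p \<Rightarrow> 'n\<times>'p \<Rightarrow> 'n\<times>'p \<Rightarrow> real^'p^'n \<Rightarrow> real" where
  "d2w i i1 i2 Y = b * (dw i i2 Y * CC i i1 Y + ww i Y * (- 2 * (if fst i = fst i1 then dp i1 i2 Y else 0) + dw i1 i2 Y))"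

lemma dd_ww: "dd (ww i) i' (dw i i')"
proof -
  have e: "ww i = (\<lambda>Y. qq (fst i) Y * pp i Y)" by (rule ext) (simp add: ww_def)
  have "dd (\<lambda>Y. qq (fst i) Y * pp i Y) i' (\<lambda>Y. (b * qq (fst i) Y * pp i' Y * (qq (fst i') Y - (if fst i = fst i' then 1 else 0))) * pp i Y
     + qq (fst i) Y * (b * pp i Y * ((if i = i' then 1 else 0) - (if fst i = fst i' then pp i' Y else 0))))"
    by (intro dd_mult dd_qq dd_pp)
  then show ?thesis unfolding e
    by (rule dd_cong) (unfold dw_def CC_def ww_def, rule alg_ww)
qed

lemma dd_pp': "dd (pp i) i' (dp i i')"
  by (rule dd_cong[OF dd_pp]) (simp add: dp_def)

lemma dd_if: "dd f i f' \<Longrightarrow> dd (\<lambda>Y. if c then f Y else 0) i (\<lambda>Y. if c then f' Y else 0)"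
  by (cases c) (auto simp: dd_const)

lemma dd_dw: "dd (dw i i1) i2 (d2w i i1 i2)"
proof -
  have e: "dw i i1 = (\<lambda>Y. b * ww i Y * ((if i = i1 then 1 else 0) + (-2) * (if fst i = fst i1 then pp i1 Y else 0) + ww i1 Y))"
    by (rule ext) (unfold dw_def CC_def, rule alg_cc)
  have d1: "dd (\<lambda>Y. b * ww i Y) i2 (\<lambda>Y. 0 * ww i Y + b * dw i i2 Y)"
    by (rule dd_mult[OF dd_const dd_ww])
  have d2: "dd (\<lambda>Y. (if i = i1 then 1 else 0) + (-2) * (if fst i = fst i1 then pp i1 Y else 0) + ww i1 Y) i2
     (\<lambda>Y. (0 + (0 * (if fst i = fst i1 then pp i1 Y else 0) + (-2) * (if fst i = fst i1 then dp i1 i2 Y else 0))) + dw i1 i2 Y)"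
    by (rule dd_add[OF dd_add[OF dd_const dd_mult[OF dd_const dd_if[OF dd_pp']]] dd_ww])
  note d3 = dd_mult[OF d1 d2]
  have eq: "(0 * ww i Y + b * dw i i2 Y) * ((if i = i1 then 1 else 0) + (-2) * (if fst i = fst i1 then pp i1 Y else 0) + ww i1 Y)
     + b * ww i Y * ((0 + (0 * (if fst i = fst i1 then pp i1 Y else 0) + (-2) * (if fst i = fst i1 then dp i1 i2 Y else 0))) + dw i1 i2 Y)
     = d2w i i1 i2 Y" for Y
    unfolding d2w_def CC_def by (rule alg_dw)
  show ?thesis unfolding e
    by (rule dd_cong[OF d3 eq])
qed

end


lemma abs_lem: fixes b W P Q I R :: real assumes "b \<ge> 0" "W \<ge> 0"
  shows "\<bar>b * (P * Q + W * (- 2 * I + R))\<bar> \<le> b * (\<bar>P\<bar> * \<bar>Q\<bar> + W * (2 * \<bar>I\<bar> + \<bar>R\<bar>))"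
proof -
  have 1: "\<bar>- 2 * I + R\<bar> \<le> 2 * \<bar>I\<bar> + \<bar>R\<bar>" by (cases "I \<ge> 0"; cases "R \<ge> 0"; cases "- 2 * I + R \<ge> 0") auto
  have 2: "\<bar>P * Q + W * (- 2 * I + R)\<bar> \<le> \<bar>P\<bar> * \<bar>Q\<bar> + W * \<bar>- 2 * I + R\<bar>"
    using abs_triangle_ineq[of "P * Q" "W * (- 2 * I + R)"] assms(2) by (simp add: abs_mult)
  have "\<bar>b * (P * Q + W * (- 2 * I + R))\<bar> = b * \<bar>P * Q + W * (- 2 * I + R)\<bar>"
    using assms(1) by (simp add: abs_mult)
  also have "\<dots> \<le> b * (\<bar>P\<bar> * \<bar>Q\<bar> + W * (2 * \<bar>I\<bar> + \<bar>R\<bar>))"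
    using 2 mult_left_mono[OF 1 assms(2)] assms(1) by (intro mult_left_mono) linarith+
  finally show ?thesis .
qed

context fixes b :: real and mu :: "real^'p::finite^'n::finite" assumes bpos: "b > 0" begin

definition AA :: "'n\<times>'p \<Rightarrow> 'n\<times>'p \<Rightarrow> real^'p^'n \<Rightarrow> real" where
  "AA i i1 Y = (if i = i1 then 1 else 0) + 2 * (if fst i = fst i1 then pp b mu i1 Y else 0) + ww b mu i1 Y"
definition PP :: "'n\<times>'p \<Rightarrow> 'n\<times>'p \<Rightarrow> real^'p^'n \<Rightarrow> real" where
  "PP i1 i2 Y = (if i1 = i2 then 1 else 0) + (if fst i1 = fst i2 then pp b mu i2 Y else 0)"
definition BB :: "'n\<times>'p \<Rightarrow> 'n\<times>'p \<Rightarrow> 'n\<times>'p \<Rightarrow> real^'p^'n \<Rightarrow> real" where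
  "BB i i1 i2 Y = AA i i2 Y * AA i i1 Y + 2 * (if fst i = fst i1 then pp b mu i1 Y else 0) * PP i1 i2 Y
     + ww b mu i1 Y * AA i1 i2 Y"

lemmas pos = pp_pos[OF bpos, of mu] ww_pos[OF bpos, of mu]

lemma AA_nonneg: "AA i i1 Y \<ge> 0"
  using pos[of i1 Y] by (auto simp: AA_def intro!: add_nonneg_nonneg)
lemma PP_nonneg: "PP i1 i2 Y \<ge> 0"
  using pos[of i2 Y] by (auto simp: PP_def)
lemma BB_nonneg: "BB i i1 i2 Y \<ge> 0"
  using pos[of i1 Y] AA_nonneg PP_nonneg by (auto simp: BB_def intro!: add_nonneg_nonneg)

lemma abs_CC: "\<bar>CC b mu i i1 Y\<bar> \<le> AA i i1 Y"
  using pos[of i1 Y] by (auto simp: CC_def[OF bpos] AA_def)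

lemma sum_AA: "(\<Sum>i1\<in>UNIV. AA i i1 Y) = 4"
  by (simp add: AA_def sum.distrib sum_distrib_left[symmetric] sum_pp_row[OF bpos] sum_ww[OF bpos])

lemma sum_PP: "(\<Sum>i2\<in>UNIV. PP i1 i2 Y) = 2"
  by (simp add: PP_def sum.distrib sum_pp_row[OF bpos])

lemma abs_dw: "\<bar>dw b mu i i1 Y\<bar> \<le> b * ww b mu i Y * AA i i1 Y"
proof -
  have "\<bar>dw b mu i i1 Y\<bar> = b * ww b mu i Y * \<bar>CC b mu i i1 Y\<bar>"
    using bpos pos[of i Y] by (simp add: dw_def abs_mult)
  also have "\<dots> \<le> b * ww b mu i Y * AA i i1 Y"
    using bpos pos[of i Y] abs_CC by (intro mult_left_mono) auto
  finally show ?thesis .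
qed

lemma abs_dp: "\<bar>dp b mu i1 i2 Y\<bar> \<le> b * pp b mu i1 Y * PP i1 i2 Y"
proof -
  have "\<bar>dp b mu i1 i2 Y\<bar> = b * pp b mu i1 Y * \<bar>(if i1 = i2 then 1 else 0) - (if fst i1 = fst i2 then pp b mu i2 Y else 0)\<bar>"
    using bpos pos[of i1 Y] by (simp add: dp_def abs_mult)
  also have "\<dots> \<le> b * pp b mu i1 Y * PP i1 i2 Y"
    using bpos pos[of i1 Y] pos[of i2 Y] by (intro mult_left_mono) (auto simp: PP_def)
  finally show ?thesis .
qed

lemma abs_d2w: "\<bar>d2w b mu i i1 i2 Y\<bar> \<le> b^2 * ww b mu i Y * BB i i1 i2 Y"
proof -
  have a: "\<bar>(if fst i = fst i1 then dp b mu i1 i2 Y else 0)\<bar> \<le> (if fst i = fst i1 then pp b mu i1 Y else 0) * (b * PP i1 i2 Y)"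
    using abs_dp[of i1 i2 Y] by (auto simp: algebra_simps)
  have "\<bar>d2w b mu i i1 i2 Y\<bar> \<le> b * (\<bar>dw b mu i i2 Y\<bar> * \<bar>CC b mu i i1 Y\<bar> + ww b mu i Y * (2 * \<bar>(if fst i = fst i1 then dp b mu i1 i2 Y else 0)\<bar> + \<bar>dw b mu i1 i2 Y\<bar>))"
    unfolding d2w_def[OF bpos] using bpos pos[of i Y] by (intro abs_lem) auto
  also have "\<dots> \<le> b * ((b * ww b mu i Y * AA i i2 Y) * AA i i1 Y + ww b mu i Y * (2 * ((if fst i = fst i1 then pp b mu i1 Y else 0) * (b * PP i1 i2 Y)) + b * ww b mu i1 Y * AA i1 i2 Y))"
    using bpos pos[of i Y] pos[of i1 Y] AA_nonneg
    by (intro mult_left_mono add_mono mult_mono abs_dw abs_CC a) auto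
  also have "\<dots> = b^2 * ww b mu i Y * BB i i1 i2 Y"
    by (simp add: BB_def algebra_simps power2_eq_square)
  finally show ?thesis .
qed

lemma sum_BB: "(\<Sum>i1\<in>UNIV. \<Sum>i2\<in>UNIV. BB i i1 i2 Y) = 24"
proof -
  have "(\<Sum>i2\<in>UNIV. BB i i1 i2 Y) = 4 * AA i i1 Y + 4 * (if fst i = fst i1 then pp b mu i1 Y else 0) + 4 * ww b mu i1 Y" for i1
    by (simp add: BB_def sum.distrib sum_distrib_left[symmetric] sum_distrib_right[symmetric] sum_AA sum_PP)
  then show ?thesis
    by (simp add: sum.distrib sum_distrib_left[symmetric] sum_AA sum_pp_row[OF bpos] sum_ww[OF bpos])
qed

end


lemma sum_pair: "(\<Sum>k\<in>UNIV. \<Sum>j\<in>UNIV. (h k j :: real)) = (\<Sum>z\<in>(UNIV::('a::finite \<times> 'b::finite) set). h (fst z) (snd z))"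
  by (simp only: sum_pair2 fst_conv snd_conv)

lemma sum4: "(\<Sum>k1\<in>UNIV. \<Sum>k2\<in>UNIV. \<Sum>j1\<in>UNIV. \<Sum>j2\<in>UNIV. (h (k1,j1) (k2,j2) :: real)) =
   (\<Sum>z\<in>(UNIV::('a::finite \<times> 'b::finite) set). \<Sum>y\<in>UNIV. h z y)"
proof -
  have "(\<Sum>k1\<in>UNIV. \<Sum>k2\<in>UNIV. \<Sum>j1\<in>UNIV. \<Sum>j2\<in>UNIV. (h (k1,j1) (k2,j2) :: real)) =
        (\<Sum>k1\<in>UNIV. \<Sum>j1\<in>UNIV. \<Sum>k2\<in>UNIV. \<Sum>j2\<in>UNIV. h (k1,j1) (k2,j2))"
    by (rule sum.cong[OF refl], rule sum.swap)
  also have "\<dots> = (\<Sum>z\<in>(UNIV::('a \<times> 'b) set). \<Sum>y\<in>UNIV. h z y)"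
    by (simp only: sum_pair2)
  finally show ?thesis .
qed

lemma sum6: "(\<Sum>k1\<in>UNIV. \<Sum>k2\<in>UNIV. \<Sum>k3\<in>UNIV. \<Sum>j1\<in>UNIV. \<Sum>j2\<in>UNIV. \<Sum>j3\<in>UNIV. (h (k1,j1) (k2,j2) (k3,j3) :: real)) =
   (\<Sum>z\<in>(UNIV::('a::finite \<times> 'b::finite) set). \<Sum>y\<in>UNIV. \<Sum>x\<in>UNIV. h z y x)"
proof -
  have "(\<Sum>k1\<in>UNIV. \<Sum>k2\<in>UNIV. \<Sum>k3\<in>UNIV. \<Sum>j1\<in>UNIV. \<Sum>j2\<in>UNIV. \<Sum>j3\<in>UNIV. (h (k1,j1) (k2,j2) (k3,j3) :: real)) =
    (\<Sum>k1\<in>UNIV. \<Sum>k2\<in>UNIV. \<Sum>j1\<in>UNIV. \<Sum>k3\<in>UNIV. \<Sum>j2\<in>UNIV. \<Sum>j3\<in>UNIV. h (k1,j1) (k2,j2) (k3,j3))"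
    apply (rule sum.cong[OF refl])
    apply (rule sum.cong[OF refl])
    apply (rule sum.swap)
    done
  also have "\<dots> = (\<Sum>k1\<in>UNIV. \<Sum>j1\<in>UNIV. \<Sum>k2\<in>UNIV. \<Sum>k3\<in>UNIV. \<Sum>j2\<in>UNIV. \<Sum>j3\<in>UNIV. h (k1,j1) (k2,j2) (k3,j3))"
    apply (rule sum.cong[OF refl])
    apply (rule sum.swap)
    done
  also have "\<dots> = (\<Sum>k1\<in>UNIV. \<Sum>j1\<in>UNIV. \<Sum>k2\<in>UNIV. \<Sum>j2\<in>UNIV. \<Sum>k3\<in>UNIV. \<Sum>j3\<in>UNIV. h (k1,j1) (k2,j2) (k3,j3))"
    apply (rule sum.cong[OF refl])
    apply (rule sum.cong[OF refl])
    apply (rule sum.cong[OF refl])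
    apply (rule sum.swap)
    done
  also have "\<dots> = (\<Sum>z\<in>(UNIV::('a \<times> 'b) set). \<Sum>y\<in>UNIV. \<Sum>x\<in>UNIV. h z y x)"
    by (simp only: sum_pair2)
  finally show ?thesis .
qed

lemma swap3: "(\<Sum>z\<in>A. \<Sum>y\<in>B. \<Sum>x\<in>C. T x y z) = (\<Sum>x\<in>C. \<Sum>y\<in>B. \<Sum>z\<in>A. (T x y z :: real))"
proof -
  have "(\<Sum>z\<in>A. \<Sum>y\<in>B. \<Sum>x\<in>C. T x y z) = (\<Sum>z\<in>A. \<Sum>x\<in>C. \<Sum>y\<in>B. T x y z)"
    by (rule sum.cong[OF refl], rule sum.swap)
  also have "\<dots> = (\<Sum>x\<in>C. \<Sum>z\<in>A. \<Sum>y\<in>B. T x y z)" by (rule sum.swap)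
  also have "\<dots> = (\<Sum>x\<in>C. \<Sum>y\<in>B. \<Sum>z\<in>A. T x y z)"
    by (rule sum.cong[OF refl], rule sum.swap)
  finally show ?thesis .
qed

lemma supnorm_ge: "ereal \<bar>h t\<bar> \<le> supnorm h"
  unfolding supnorm_def by (rule SUP_upper) auto

lemma supnorm_nonneg: "0 \<le> supnorm h"
  using supnorm_ge[of h 0] by (metis abs_ge_zero ereal_less_eq(5) order.trans)



lemma abs_M3: fixes c1 c2 c3 wx wy wz dyz dxz dxy d2 :: real
  assumes "wx \<ge> 0" "wy \<ge> 0" "wz \<ge> 0"
  shows "\<bar>(c3 * wz * wy + c2 * dyz) * wx + c2 * wy * dxz + (c2 * wz * dxy + c1 * d2)\<bar>
    \<le> \<bar>c3\<bar> * (wx * (wy * wz)) + \<bar>c2\<bar> * (\<bar>dyz\<bar> * wx) + \<bar>c2\<bar> * (wy * \<bar>dxz\<bar>) + \<bar>c2\<bar> * (wz * \<bar>dxy\<bar>) + \<bar>c1\<bar> * \<bar>d2\<bar>"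
proof -
  have e: "(c3 * wz * wy + c2 * dyz) * wx + c2 * wy * dxz + (c2 * wz * dxy + c1 * d2)
     = c3 * (wx * (wy * wz)) + c2 * (dyz * wx) + c2 * (wy * dxz) + c2 * (wz * dxy) + c1 * d2"
    by (simp add: algebra_simps)
  have t: "\<bar>a + b + c + d + f\<bar> \<le> \<bar>a\<bar> + \<bar>b\<bar> + \<bar>c\<bar> + \<bar>d\<bar> + \<bar>f\<bar>" for a b c d f :: real
    by arith
  show ?thesis unfolding e
    using t[of "c3 * (wx * (wy * wz))" "c2 * (dyz * wx)" "c2 * (wy * dxz)" "c2 * (wz * dxy)" "c1 * d2"] assms
    by (simp add: abs_mult abs_of_nonneg)
qed

theorem lemmaF3:
  fixes \<beta> :: real and mu X :: "real^'p::finite^'n::finite"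
    and g g1 g2 g3 :: "real \<Rightarrow> real"
  assumes "\<beta> > 0"
    and "\<And>t. (g has_real_derivative g1 t) (at t)"
    and "\<And>t. (g1 has_real_derivative g2 t) (at t)"
    and "\<And>t. (g2 has_real_derivative g3 t) (at t)"
    and "continuous_on UNIV g3"
  defines "m \<equiv> (\<lambda>Y. g (Gbeta \<beta> mu Y))"
  shows "ereal (\<Sum>k\<in>UNIV. \<Sum>j\<in>UNIV. \<bar>pd m k j X\<bar>) \<le> supnorm g1
    \<and> ereal (\<Sum>k1\<in>UNIV. \<Sum>k2\<in>UNIV. \<Sum>j1\<in>UNIV. \<Sum>j2\<in>UNIV.
             \<bar>pd (pd m k2 j2) k1 j1 X\<bar>)
         \<le> supnorm g2 + ereal (4 * \<beta>) * supnorm g1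
    \<and> ereal (\<Sum>k1\<in>UNIV. \<Sum>k2\<in>UNIV. \<Sum>k3\<in>UNIV. \<Sum>j1\<in>UNIV. \<Sum>j2\<in>UNIV. \<Sum>j3\<in>UNIV.
             \<bar>pd (pd (pd m k3 j3) k2 j2) k1 j1 X\<bar>)
         \<le> supnorm g3 + ereal (16 * \<beta>) * supnorm g2 + ereal (24 * \<beta>^2) * supnorm g1"
proof -
  note bp = assms(1)
  define G where "G = Gbeta \<beta> mu"
  define w where "w = ww \<beta> mu"
  define A where "A = AA \<beta> mu"
  define B where "B = BB \<beta> mu"
  define dW where "dW = dw \<beta> mu"
  define d2W where "d2W = d2w \<beta> mu"
  have dG: "dd G i (w i)" for i unfolding G_def w_def by (rule dd_G[OF bp])
  have dw': "dd (w i) i1 (dW i i1)" for i i1 unfolding w_def dW_def by (rule dd_ww[OF bp])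
  have d2w': "dd (dW i i1) i2 (d2W i i1 i2)" for i i1 i2 unfolding d2W_def dW_def by (rule dd_dw[OF bp])
  define M1 where "M1 i Y = g1 (G Y) * w i Y" for i Y
  define M2 where "M2 i i1 Y = g2 (G Y) * w i1 Y * w i Y + g1 (G Y) * dW i i1 Y" for i i1 Y
  define M3 where "M3 i i1 i2 Y = ((g3 (G Y) * w i2 Y) * w i1 Y + g2 (G Y) * dW i1 i2 Y) * w i Y
      + (g2 (G Y) * w i1 Y) * dW i i2 Y + ((g2 (G Y) * w i2 Y) * dW i i1 Y + g1 (G Y) * d2W i i1 i2 Y)" for i i1 i2 Y
  have e1: "pd m k j = M1 (k,j)" for k j
    unfolding m_def M1_def G_def[symmetric]
    by (rule dd_pd, rule dd_chain[OF assms(2) dG])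
  have e2: "pd (M1 i) k j = M2 i (k,j)" for i k j
  proof -
    have e: "M1 i = (\<lambda>Y. g1 (G Y) * w i Y)" by (rule ext) (simp add: M1_def)
    show ?thesis unfolding e
      by (rule dd_pd, rule dd_cong, rule dd_mult[OF dd_chain[OF assms(3) dG] dw']) (simp add: M2_def)
  qed
  have e3: "pd (M2 i i1) k j = M3 i i1 (k,j)" for i i1 k j
  proof -
    have e: "M2 i i1 = (\<lambda>Y. g2 (G Y) * w i1 Y * w i Y + g1 (G Y) * dW i i1 Y)" by (rule ext) (simp add: M2_def)
    show ?thesis unfolding e
      by (rule dd_pd, rule dd_cong, rule dd_add[OF dd_mult[OF dd_mult[OF dd_chain[OF assms(4) dG] dw'] dw'] dd_mult[OF dd_chain[OF assms(3) dG] d2w']])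
        (simp add: M3_def)
  qed
  define a1 where "a1 = \<bar>g1 (G X)\<bar>"
  define a2 where "a2 = \<bar>g2 (G X)\<bar>"
  define a3 where "a3 = \<bar>g3 (G X)\<bar>"
  have wpos: "w i X > 0" for i unfolding w_def by (rule ww_pos[OF bp])
  have sw: "(\<Sum>i\<in>UNIV. w i X) = 1" unfolding w_def by (rule sum_ww[OF bp])
  have sA: "(\<Sum>i1\<in>UNIV. A i i1 X) = 4" for i unfolding A_def by (rule sum_AA[OF bp])
  have sB: "(\<Sum>i1\<in>UNIV. \<Sum>i2\<in>UNIV. B i i1 i2 X) = 24" for i unfolding B_def by (rule sum_BB[OF bp])
  have Ann: "A i i1 X \<ge> 0" for i i1 unfolding A_def by (rule AA_nonneg[OF bp])
  have adw: "\<bar>dW i i1 X\<bar> \<le> \<beta> * w i X * A i i1 X" for i i1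
    unfolding dW_def w_def A_def by (rule abs_dw[OF bp])
  have ad2w: "\<bar>d2W i i1 i2 X\<bar> \<le> \<beta>^2 * w i X * B i i1 i2 X" for i i1 i2
    unfolding d2W_def w_def B_def by (rule abs_d2w[OF bp])
  have S1: "(\<Sum>k\<in>UNIV. \<Sum>j\<in>UNIV. \<bar>pd m k j X\<bar>) = a1"
  proof -
    have "(\<Sum>k\<in>UNIV. \<Sum>j\<in>UNIV. \<bar>pd m k j X\<bar>) = (\<Sum>i\<in>UNIV. \<bar>M1 i X\<bar>)"
      unfolding e1 by (simp only: sum_pair2)
    also have "\<dots> = (\<Sum>i\<in>UNIV. a1 * w i X)"
      by (intro sum.cong) (auto simp: M1_def a1_def abs_mult abs_of_pos[OF wpos])
    also have "\<dots> = a1" by (simp add: sum_distrib_left[symmetric] sw)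
    finally show ?thesis .
  qed
  have S2: "(\<Sum>k1\<in>UNIV. \<Sum>k2\<in>UNIV. \<Sum>j1\<in>UNIV. \<Sum>j2\<in>UNIV. \<bar>pd (pd m k2 j2) k1 j1 X\<bar>) \<le> a2 + 4 * \<beta> * a1"
  proof -
    have "(\<Sum>k1\<in>UNIV. \<Sum>k2\<in>UNIV. \<Sum>j1\<in>UNIV. \<Sum>j2\<in>UNIV. \<bar>pd (pd m k2 j2) k1 j1 X\<bar>)
        = (\<Sum>z\<in>UNIV. \<Sum>y\<in>UNIV. \<bar>M2 y z X\<bar>)"
      unfolding e1 e2 using sum4[of "\<lambda>z y. \<bar>M2 y z X\<bar>"] by simp
    also have "\<dots> \<le> (\<Sum>z\<in>UNIV. \<Sum>y\<in>UNIV. a2 * w z X * w y X + a1 * \<beta> * (w y X * A y z X))"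
    proof (intro sum_mono)
      fix z y
      have "\<bar>M2 y z X\<bar> \<le> a2 * (w z X * w y X) + a1 * \<bar>dW y z X\<bar>"
        using wpos[of z] wpos[of y] unfolding M2_def a1_def a2_def
        by (simp add: abs_mult order.trans[OF abs_triangle_ineq])
      also have "\<dots> \<le> a2 * (w z X * w y X) + a1 * (\<beta> * w y X * A y z X)"
        by (intro add_left_mono mult_left_mono adw) (auto simp: a1_def)
      finally show "\<bar>M2 y z X\<bar> \<le> a2 * w z X * w y X + a1 * \<beta> * (w y X * A y z X)"
        by (simp add: algebra_simps)
    qed
    also have "\<dots> = a2 + 4 * \<beta> * a1"
      by (simp add: sum.distrib sum_distrib_left[symmetric] sum_distrib_right[symmetric] sw
          sum.swap[of "\<lambda>z y. w y X * A y z X"] sA; (simp add: algebra_simps)?)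
    finally show ?thesis .
  qed
  have S3: "(\<Sum>k1\<in>UNIV. \<Sum>k2\<in>UNIV. \<Sum>k3\<in>UNIV. \<Sum>j1\<in>UNIV. \<Sum>j2\<in>UNIV. \<Sum>j3\<in>UNIV.
             \<bar>pd (pd (pd m k3 j3) k2 j2) k1 j1 X\<bar>) \<le> a3 + 12 * \<beta> * a2 + 24 * \<beta>^2 * a1"
  proof -
    have "(\<Sum>k1\<in>UNIV. \<Sum>k2\<in>UNIV. \<Sum>k3\<in>UNIV. \<Sum>j1\<in>UNIV. \<Sum>j2\<in>UNIV. \<Sum>j3\<in>UNIV.
             \<bar>pd (pd (pd m k3 j3) k2 j2) k1 j1 X\<bar>) = (\<Sum>z\<in>UNIV. \<Sum>y\<in>UNIV. \<Sum>x\<in>UNIV. \<bar>M3 x y z X\<bar>)"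
      unfolding e1 e2 e3 using sum6[of "\<lambda>z y x. \<bar>M3 x y z X\<bar>"] by simp
    also have "\<dots> \<le> (\<Sum>z\<in>UNIV. \<Sum>y\<in>UNIV. \<Sum>x\<in>UNIV.
         a3 * (w x X * (w y X * w z X))
       + a2 * \<beta> * (w x X * (w y X * A y z X))
       + a2 * \<beta> * (w x X * (w y X * A x z X))
       + a2 * \<beta> * (w x X * (w z X * A x y X))
       + a1 * \<beta>^2 * (w x X * B x y z X))"
    proof (intro sum_mono)
      fix x y z
      have "\<bar>M3 x y z X\<bar> \<le> a3 * (w x X * (w y X * w z X)) + a2 * (\<bar>dW y z X\<bar> * w x X)
          + a2 * (w y X * \<bar>dW x z X\<bar>) + a2 * (w z X * \<bar>dW x y X\<bar>) + a1 * \<bar>d2W x y z X\<bar>"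
        unfolding M3_def a1_def a2_def a3_def
        by (rule abs_M3[OF less_imp_le[OF wpos] less_imp_le[OF wpos] less_imp_le[OF wpos]])
      also have "\<dots> \<le> a3 * (w x X * (w y X * w z X)) + a2 * ((\<beta> * w y X * A y z X) * w x X)
          + a2 * (w y X * (\<beta> * w x X * A x z X)) + a2 * (w z X * (\<beta> * w x X * A x y X)) + a1 * (\<beta>^2 * w x X * B x y z X)"
        using wpos[of z] wpos[of y] wpos[of x]
        by (intro add_mono mult_left_mono mult_right_mono adw ad2w order.refl) (auto simp: a1_def a2_def)
      finally show "\<bar>M3 x y z X\<bar> \<le> a3 * (w x X * (w y X * w z X))
       + a2 * \<beta> * (w x X * (w y X * A y z X))
       + a2 * \<beta> * (w x X * (w y X * A x z X))
       + a2 * \<beta> * (w x X * (w z X * A x y X))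
       + a1 * \<beta>^2 * (w x X * B x y z X)"
        by (simp add: algebra_simps)
    qed
    also have "\<dots> = (\<Sum>x\<in>UNIV. \<Sum>y\<in>UNIV. \<Sum>z\<in>UNIV.
         a3 * (w x X * (w y X * w z X))
       + a2 * \<beta> * (w x X * (w y X * A y z X))
       + a2 * \<beta> * (w x X * (w y X * A x z X))
       + a2 * \<beta> * (w x X * (w z X * A x y X))
       + a1 * \<beta>^2 * (w x X * B x y z X))"
      by (rule swap3)
    also have "\<dots> = a3 + 12 * \<beta> * a2 + 24 * \<beta>^2 * a1"
      by (simp add: sum.distrib sum_distrib_left[symmetric] sum_distrib_right[symmetric] sw sA sB; (simp add: algebra_simps)?)
    finally show ?thesis .
  qed
  have g1: "ereal a1 \<le> supnorm g1" unfolding a1_def by (rule supnorm_ge)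
  have g2: "ereal a2 \<le> supnorm g2" unfolding a2_def by (rule supnorm_ge)
  have g3: "ereal a3 \<le> supnorm g3" unfolding a3_def by (rule supnorm_ge)
  have a1n: "a1 \<ge> 0" "a2 \<ge> 0" by (auto simp: a1_def a2_def)
  have P1: "ereal (\<Sum>k\<in>UNIV. \<Sum>j\<in>UNIV. \<bar>pd m k j X\<bar>) \<le> supnorm g1"
    using S1 g1 by simp
  have P2: "ereal (\<Sum>k1\<in>UNIV. \<Sum>k2\<in>UNIV. \<Sum>j1\<in>UNIV. \<Sum>j2\<in>UNIV. \<bar>pd (pd m k2 j2) k1 j1 X\<bar>)
         \<le> supnorm g2 + ereal (4 * \<beta>) * supnorm g1"
  proof -
    have "ereal (\<Sum>k1\<in>UNIV. \<Sum>k2\<in>UNIV. \<Sum>j1\<in>UNIV. \<Sum>j2\<in>UNIV. \<bar>pd (pd m k2 j2) k1 j1 X\<bar>)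
        \<le> ereal (a2 + 4 * \<beta> * a1)" using S2 by simp
    also have "\<dots> = ereal a2 + ereal (4 * \<beta>) * ereal a1" by simp
    also have "\<dots> \<le> supnorm g2 + ereal (4 * \<beta>) * supnorm g1"
      using bp by (intro add_mono g2 ereal_mult_left_mono g1) auto
    finally show ?thesis .
  qed
  have P3: "ereal (\<Sum>k1\<in>UNIV. \<Sum>k2\<in>UNIV. \<Sum>k3\<in>UNIV. \<Sum>j1\<in>UNIV. \<Sum>j2\<in>UNIV. \<Sum>j3\<in>UNIV.
             \<bar>pd (pd (pd m k3 j3) k2 j2) k1 j1 X\<bar>)
         \<le> supnorm g3 + ereal (16 * \<beta>) * supnorm g2 + ereal (24 * \<beta>^2) * supnorm g1"
  proof -
    have "ereal (\<Sum>k1\<in>UNIV. \<Sum>k2\<in>UNIV. \<Sum>k3\<in>UNIV. \<Sum>j1\<in>UNIV. \<Sum>j2\<in>UNIV. \<Sum>j3\<in>UNIV.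
             \<bar>pd (pd (pd m k3 j3) k2 j2) k1 j1 X\<bar>)
        \<le> ereal (a3 + 16 * \<beta> * a2 + 24 * \<beta>^2 * a1)"
      using S3 bp a1n by (simp add: order.trans[OF S3])
    also have "\<dots> = ereal a3 + ereal (16 * \<beta>) * ereal a2 + ereal (24 * \<beta>^2) * ereal a1" by simp
    also have "\<dots> \<le> supnorm g3 + ereal (16 * \<beta>) * supnorm g2 + ereal (24 * \<beta>^2) * supnorm g1"
      using bp by (intro add_mono g3 ereal_mult_left_mono g1 g2) auto
    finally show ?thesis .
  qed
  show ?thesis using P1 P2 P3 by blast
qed

end
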